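(* Let $\Lambda=\{x_k\}$ be a homogeneous Poisson point process on $\mathbb{R}^2$ with intensity $\lambda\rho_f>0$, with i.i.d. positive marks $\Psi_{0k}$ distributed as a random variable $\Psi_I$ with $\mathbb{E}[\Psi_I^{\delta}]<\infty$, independent of $\Lambda$, and let $\Psi_0>0$ be a random variable independent of $\Lambda$ and the marks. Let $\alpha>2$, $\delta=2/\alpha$, $\beta>0$, $R_f>0$, $P>0$, $\Gamma>0$, and define $$\mathrm{SIR}=\frac{\Psi_0 R_f^{-\beta}}{\sum_{k}P^2\Psi_{0k}|x_k|^{-\alpha}}.$$ Then $$\Pr(\mathrm{SIR}\le\Gamma)\ \ge\ 1-\mathbb{E}_{\Psi_0}\!\left[\exp\!\big(-\rho_f\kappa\,\Gamma^{\delta}\Psi_0^{-\delta}\big)\right],\qquad \kappa=\pi\lambda\,\mathbb{E}[\Psi_I^{\delta}]\,\big(P^2R_f^{\beta}\big)^{\delta}.$$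
   Context: Model interpretation: femtocell base stations form a Poisson point process of intensity $\lambda$; each accesses a given subchannel independently with probability $\rho_f$ (so interferers on a subchannel form a Poisson process of intensity $\lambda\rho_f$). $\Psi_0$ is the composite fading/shadowing gain to the desired user at the femtocell edge distance $R_f$ with in-home path-loss exponent $\beta$, $\Psi_{0k}$ are the interferer gains, $\alpha$ is the inter-femtocell path-loss exponent, and $P$ is the wall penetration loss (entering squared). *)

theory Defs
  imports "HOL-Probability.Probability"
begin

text \<open>A homogeneous Poisson point process on the plane with intensity mu, given by an
  enumeration X omega :: nat => real^2 of its (distinct) points.\<close>

definition point_count :: "(nat \<Rightarrow> real^2) \<Rightarrow> (real^2) set \<Rightarrow> nat" where
  "point_count x B = card {k. x k \<in> B}"

definition poisson_pp :: "'w measure \<Rightarrow> ('w \<Rightarrow> nat \<Rightarrow> real^2) \<Rightarrow> real \<Rightarrow> bool" where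
  "poisson_pp M X mu \<longleftrightarrow>
     prob_space M \<and>
     X \<in> M \<rightarrow>\<^sub>M PiM UNIV (\<lambda>_. borel) \<and>
     (\<forall>w\<in>space M. inj (X w)) \<and>
     (\<forall>(n::nat) (B :: nat \<Rightarrow> (real^2) set).
        (\<forall>i<n. B i \<in> sets lborel \<and> bounded (B i)) \<and> disjoint_family_on B {..<n} \<longrightarrow>
          (\<forall>i<n. AE w in M. finite {k. X w k \<in> B i}) \<and>
          prob_space.indep_vars M (\<lambda>_. count_space UNIV)
             (\<lambda>i w. point_count (X w) (B i)) {..<n} \<and>
          (\<forall>i<n. \<forall>j::nat.
             measure M {w \<in> space M. point_count (X w) (B i) = j}
               = exp (- (mu * measure lborel (B i))) * (mu * measure lborel (B i)) ^ j / fact j))"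

definition indep_rv :: "'w measure \<Rightarrow> 'a measure \<Rightarrow> ('w \<Rightarrow> 'a) \<Rightarrow> 'b measure \<Rightarrow> ('w \<Rightarrow> 'b) \<Rightarrow> bool" where
  "indep_rv M Ma A Mb B \<longleftrightarrow>
     A \<in> M \<rightarrow>\<^sub>M Ma \<and> B \<in> M \<rightarrow>\<^sub>M Mb \<and>
     prob_space.indep_set M
       (sigma_sets (space M) {A -` S \<inter> space M | S. S \<in> sets Ma})
       (sigma_sets (space M) {B -` S \<inter> space M | S. S \<in> sets Mb})"

text \<open>Signal-to-interference ratio (extended nonnegative reals, so that an infinite or zero
  interference is handled by ennreal arithmetic).\<close>

definition SIR :: "real \<Rightarrow> real \<Rightarrow> real \<Rightarrow> real \<Rightarrow> real \<Rightarrow> (nat \<Rightarrow> real^2) \<Rightarrow> (nat \<Rightarrow> real)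
                    \<Rightarrow> ennreal" where
  "SIR alpha beta Rf P psi0 x psi =
     ennreal (psi0 * Rf powr (- beta)) /
     (\<Sum>k. ennreal (P\<^sup>2 * psi k * norm (x k) powr (- alpha)))"

end

theory Submission
  imports Defs
begin


lemma indep_rv_imp_indep_var:
  assumes "prob_space M" "indep_rv M Ma A Mb B"
  shows "prob_space.indep_var M Ma A Mb B"
proof -
  interpret prob_space M by fact
  have m: "A \<in> M \<rightarrow>\<^sub>M Ma" "B \<in> M \<rightarrow>\<^sub>M Mb" and
    i: "indep_set (sigma_sets (space M) {A -` S \<inter> space M | S. S \<in> sets Ma})
       (sigma_sets (space M) {B -` S \<inter> space M | S. S \<in> sets Mb})"
    using assms(2) unfolding indep_rv_def by auto
  show ?thesis
    unfolding indep_var_def indep_vars_def2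
  proof
    show "\<forall>i\<in>UNIV. random_variable (case_bool Ma Mb i) (case_bool A B i)"
      using m by (auto split: bool.split)
    show "indep_sets (\<lambda>i. {case_bool A B i -` S \<inter> space M |S. S \<in> sets (case_bool Ma Mb i)}) UNIV"
      using i unfolding indep_set_def
      by (rule indep_sets_mono_sets) (auto split: bool.split intro: sigma_sets.Basic)
  qed
qed

definition annulus :: "real \<Rightarrow> real \<Rightarrow> (real^2) set" where
  "annulus a b = {x. x \<noteq> 0 \<and> a \<le> norm x \<and> norm x < b}"

lemma annulus_sets[measurable]: "annulus a b \<in> sets borel"
proof -
  have "annulus a b = (ball 0 b - ball 0 a) - {0}"
    by (auto simp: annulus_def)
  then show ?thesis by auto
qed

lemma annulus_bounded: "bounded (annulus a b)"
  unfolding annulus_def bounded_iff by (intro exI[of _ b]) auto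

lemma annulus_measure:
  assumes "0 \<le> a" "a \<le> b"
  shows "measure lborel (annulus a b) = pi * (b^2 - a^2)"
proof -
  have e: "annulus a b = (ball 0 b - ball 0 a) - {0}"
    by (auto simp: annulus_def)
  have v: "unit_ball_vol 2 = pi"
    using unit_ball_vol_even[of 1] by simp
  have "emeasure lborel (annulus a b) = emeasure lborel (ball (0::real^2) b - ball 0 a)"
    unfolding e by (rule emeasure_Diff_null_set) (auto intro: finite_imp_null_set_lborel)
  also have "\<dots> = emeasure lborel (ball (0::real^2) b) - emeasure lborel (ball (0::real^2) a)"
    using assms by (intro emeasure_Diff) (auto simp: emeasure_ball)
  also have "\<dots> = ennreal (pi*b^2) - ennreal (pi*a^2)" using emeasure_ball[where c="0::real^2" and r=b] emeasure_ball[where c="0::real^2" and r=a] v assms by (simp add: power2_eq_square)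
  also have "\<dots> = ennreal (pi * (b^2 - a^2))"
    using assms by (subst ennreal_minus) (auto simp: power_mono algebra_simps)
  finally show ?thesis unfolding measure_def using assms
    by (simp add: power_mono)
qed

lemma poisson_pgf:
  assumes M: "prob_space M" and N: "N \<in> M \<rightarrow>\<^sub>M count_space UNIV"
    and P: "\<And>j. measure M {w\<in>space M. N w = j} = exp (- m) * m ^ j / fact j"
    and q: "0 \<le> q"
  shows "(\<integral>\<^sup>+w. ennreal (q ^ N w) \<partial>M) = ennreal (exp (- m * (1 - q)))"
proof -
  interpret prob_space M by fact
  have "(\<integral>\<^sup>+w. ennreal (q ^ N w) \<partial>M) =
        (\<integral>\<^sup>+w. (\<Sum>j. ennreal (q ^ j) * indicator {w\<in>space M. N w = j} w) \<partial>M)"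
  proof (rule nn_integral_cong)
    fix w assume w: "w \<in> space M"
    have "(\<Sum>j. ennreal (q ^ j) * indicator {w\<in>space M. N w = j} w) =
          (\<Sum>j\<in>{N w}. ennreal (q ^ j) * indicator {w\<in>space M. N w = j} w)"
      by (rule suminf_finite) (auto simp: indicator_def)
    then show "ennreal (q ^ N w) = (\<Sum>j. ennreal (q ^ j) * indicator {w\<in>space M. N w = j} w)"
      using w by simp
  qed
  also have "\<dots> = (\<Sum>j. \<integral>\<^sup>+w. ennreal (q ^ j) * indicator {w\<in>space M. N w = j} w \<partial>M)"
    using N by (intro nn_integral_suminf) measurable
  also have "\<dots> = (\<Sum>j. ennreal (q ^ j * (exp (- m) * m ^ j / fact j)))"
  proof (rule suminf_cong)
    fix j
    have s: "{w\<in>space M. N w = j} \<in> sets M" using N by measurable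
    show "(\<integral>\<^sup>+w. ennreal (q ^ j) * indicator {w\<in>space M. N w = j} w \<partial>M) =
          ennreal (q ^ j * (exp (- m) * m ^ j / fact j))"
    proof -
      have "0 \<le> exp (- m) * m ^ j / fact j" using P[of j] measure_nonneg[of M] by metis
      then show ?thesis
      using s q by (simp add: nn_integral_cmult_indicator emeasure_eq_measure P ennreal_mult[symmetric])
    qed
  qed
  also have "\<dots> = ennreal (\<Sum>j. q ^ j * (exp (- m) * m ^ j / fact j))"
  proof (rule suminf_ennreal2)
    show "\<And>j. 0 \<le> q ^ j * (exp (- m) * m ^ j / fact j)"
      using P q by (metis measure_nonneg mult_nonneg_nonneg zero_le_power)
    have "(\<lambda>j. exp (- m) * ((q*m) ^ j / fact j)) sums (exp (- m) * exp (q * m))"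
      using exp_converges[of "q*m"] by (intro sums_mult) (simp add: divide_inverse mult.commute)
    then show "summable (\<lambda>j. q ^ j * (exp (- m) * m ^ j / fact j))"
      by (simp add: sums_iff power_mult_distrib mult_ac)
  qed
  also have "(\<Sum>j. q ^ j * (exp (- m) * m ^ j / fact j)) = exp (- m) * exp (q * m)"
  proof -
    have "(\<lambda>j. exp (- m) * ((q*m) ^ j / fact j)) sums (exp (- m) * exp (q * m))"
      using exp_converges[of "q*m"] by (intro sums_mult) (simp add: divide_inverse mult.commute)
    then show ?thesis
      by (simp add: sums_iff power_mult_distrib mult_ac)
  qed
  also have "exp (- m) * exp (q * m) = exp (- m * (1 - q))"
    by (simp add: exp_add[symmetric] algebra_simps)
  finally show ?thesis .
qed

lemma indep_rv_sym:
  assumes "prob_space M" "indep_rv M Ma A Mb B"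
  shows "indep_rv M Mb B Ma A"
proof -
  interpret prob_space M by fact
  have H: "A \<in> M \<rightarrow>\<^sub>M Ma" "B \<in> M \<rightarrow>\<^sub>M Mb"
    "indep_set (sigma_sets (space M) {A -` S \<inter> space M | S. S \<in> sets Ma})
       (sigma_sets (space M) {B -` S \<inter> space M | S. S \<in> sets Mb})"
    using assms(2) unfolding indep_rv_def by auto
  have "indep_set (sigma_sets (space M) {B -` S \<inter> space M | S. S \<in> sets Mb})
                  (sigma_sets (space M) {A -` S \<inter> space M | S. S \<in> sets Ma})"
    unfolding indep_sets2_eq
  proof (intro conjI ballI)
    show "sigma_sets (space M) {B -` S \<inter> space M | S. S \<in> sets Mb} \<subseteq> events"
      "sigma_sets (space M) {A -` S \<inter> space M | S. S \<in> sets Ma} \<subseteq> events"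
      using H(3) unfolding indep_sets2_eq by auto
    fix a b assume a: "a \<in> sigma_sets (space M) {B -` S \<inter> space M | S. S \<in> sets Mb}"
      and b: "b \<in> sigma_sets (space M) {A -` S \<inter> space M | S. S \<in> sets Ma}"
    have "prob (a \<inter> b) = prob (b \<inter> a)" by (simp add: Int_commute)
    also have "\<dots> = prob b * prob a" using H(3) a b unfolding indep_sets2_eq by blast
    finally show "prob (a \<inter> b) = prob a * prob b" by simp
  qed
  then show ?thesis using H unfolding indep_rv_def by auto
qed

lemma psi_prod:
  fixes Psi :: "nat \<Rightarrow> 'w \<Rightarrow> real" and PsiI :: "'w \<Rightarrow> real"
  assumes M: "prob_space M"
    and ind: "prob_space.indep_vars M (\<lambda>_. borel) Psi UNIV"
    and Psi_distr: "\<And>k. distr M borel (Psi k) = distr M borel PsiI"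
    and Psi_rv: "\<And>k. Psi k \<in> borel_measurable M"
    and PsiI_rv: "PsiI \<in> borel_measurable M"
    and K: "finite K"
  shows "measure M {w\<in>space M. \<forall>k\<in>K. Psi k w < c k}
          = (\<Prod>k\<in>K. measure M {w\<in>space M. PsiI w < c k})"
proof (cases "K = {}")
  case True
  interpret prob_space M by fact
  show ?thesis using True by (simp add: prob_space)
next
  case False
  interpret prob_space M by fact
  have e: "{w\<in>space M. \<forall>k\<in>K. Psi k w < c k} = (\<Inter>k\<in>K. Psi k -` {..<c k} \<inter> space M)"
    using False by auto
  have "prob (\<Inter>k\<in>K. Psi k -` {..<c k} \<inter> space M) = (\<Prod>k\<in>K. prob (Psi k -` {..<c k} \<inter> space M))"
  proof -
    have mem: "Psi k -` {..<c k} \<inter> space M \<in> {Psi k -` A \<inter> space M |A. A \<in> sets borel}" for k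
      by (rule CollectI, rule exI[of _ "{..<c k}"]) (simp add: lessThan_borel)
    show ?thesis
      using ind mem unfolding indep_vars_def2
      by (intro indep_setsD[where I=UNIV]) (use K False in auto)
  qed
  also have "\<dots> = (\<Prod>k\<in>K. measure M {w\<in>space M. PsiI w < c k})"
  proof (rule prod.cong)
    fix k
    have "prob (Psi k -` {..<c k} \<inter> space M) = measure (distr M borel (Psi k)) {..<c k}"
      using Psi_rv by (simp add: measure_distr)
    also have "\<dots> = measure (distr M borel PsiI) {..<c k}" by (simp add: Psi_distr)
    also have "\<dots> = measure M {w\<in>space M. PsiI w < c k}"
      using PsiI_rv by (simp add: measure_distr vimage_def Int_def conj_commute)
    finally show "prob (Psi k -` {..<c k} \<inter> space M) = measure M {w\<in>space M. PsiI w < c k}" .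
  qed simp
  finally show ?thesis using e by simp
qed

lemma S_ge_L:
  fixes m :: nat and u alpha y :: real
  assumes m: "m > 0" and u: "u > 0" and alpha: "alpha > 0"
  shows "pi * (max 0 (min ((max y 0 / u) powr (1/alpha)) (real m) - 1/real m))^2
    \<le> (\<Sum>i<m^2. pi * ((real (Suc i)/m)^2 - (real i/m)^2) * indicator {u * (real (Suc i)/m) powr alpha ..} y)"
    (is "?L \<le> ?S")
proof -
  define z where "z = (max y 0 / u) powr (1/alpha)"
  have tnn: "0 \<le> pi * ((real (Suc i)/m)^2 - (real i/m)^2)" for i
  proof -
    have "(real i/m)^2 \<le> (real (Suc i)/m)^2"
      by (rule power_mono) (auto intro: divide_right_mono)
    then show ?thesis by simp
  qed
  have Snn: "0 \<le> ?S" using tnn by (intro sum_nonneg) auto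
  show ?thesis
  proof (cases "y \<le> 0")
    case True
    then have "z = 0" by (simp add: z_def)
    then have "?L = 0" using m unfolding z_def[symmetric] by simp
    then show ?thesis using Snn by simp
  next
    case False
    then have y: "y > 0" by simp
    have z0: "z > 0" using y u by (simp add: z_def)
    have zpow: "z powr alpha = y / u"
      using y u alpha by (simp add: z_def powr_powr)
    define j where "j = nat \<lfloor>min z m * m\<rfloor>"
    have jle: "j \<le> m^2"
    proof -
      have "min z m * m \<le> real m * real m" using m by (simp add: mult_right_mono)
      then have "\<lfloor>min z m * m\<rfloor> \<le> int (m*m)"
        by (simp add: floor_le_iff)
      then show ?thesis unfolding j_def by (simp add: power2_eq_square nat_le_iff)
    qed
    have mzm: "0 \<le> min z m * m" using z0 by simp
    have jlow: "real j > min z m * m - 1" unfolding j_def using mzm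
      by (simp add: of_nat_nat)
    have jup: "real j \<le> min z m * m" unfolding j_def using z0 m
      by (simp add: of_nat_nat)
    have ind1: "indicator {u * (real (Suc i)/m) powr alpha ..} y = (1::real)" if "i < j" for i
    proof -
      have "real (Suc i) \<le> real j" using that by simp
      also have "\<dots> \<le> z * m"
      proof -
        have "min z m * m \<le> z * m" by (intro mult_right_mono) auto
        then show ?thesis using jup by linarith
      qed
      finally have "real (Suc i) / m \<le> z" using m by (simp add: divide_le_eq mult.commute)
      then have "(real (Suc i) / m) powr alpha \<le> z powr alpha"
        using alpha by (intro powr_mono2) auto
      then have "u * (real (Suc i) / m) powr alpha \<le> y"
        using zpow u by (simp add: field_simps)
      then show ?thesis by simp
    qed
    have "?S \<ge> (\<Sum>i<j. pi * ((real (Suc i)/m)^2 - (real i/m)^2) * indicator {u * (real (Suc i)/m) powr alpha ..} y)"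
      using jle tnn by (intro sum_mono2) auto
    also have "(\<Sum>i<j. pi * ((real (Suc i)/m)^2 - (real i/m)^2) * indicator {u * (real (Suc i)/m) powr alpha ..} y)
        = (\<Sum>i<j. pi * ((real (Suc i)/m)^2 - (real i/m)^2))"
      by (rule sum.cong[OF refl]) (subst ind1, simp_all)
    also have "\<dots> = pi * (\<Sum>i<j. (real (Suc i)/m)^2 - (real i/m)^2)"
      by (simp add: sum_distrib_left)
    also have "\<dots> = pi * (real j / m)^2"
      by (subst sum_lessThan_telescope[where f="\<lambda>i. (real i/m)^2"]) simp
    finally have A: "pi * (real j / m)^2 \<le> ?S" .
    have "max 0 (min z m - 1/m) \<le> real j / m"
    proof -
      have "(min z m * m - 1)/m \<le> real j / m" using jlow m by (intro divide_right_mono) auto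
      moreover have "(min z m * m - 1)/m = min z m - 1/m" using m by (simp add: field_simps)
      ultimately show ?thesis by simp
    qed
    then have "?L \<le> pi * (real j / m)^2"
      unfolding z_def[symmetric]
      by (intro mult_left_mono power_mono) auto
    then show ?thesis using A by (rule order.trans)
  qed
qed

lemma L_lim:
  fixes z :: real
  assumes "z \<ge> 0"
  shows "(\<lambda>m. pi * (max 0 (min z (real m) - 1/real m))^2) \<longlonglongrightarrow> pi * z^2"
proof -
  obtain N :: nat where N: "z \<le> N" using real_arch_simple by blast
  have ev: "\<forall>\<^sub>F m in sequentially. pi * (max 0 (z - 1/real m))^2 = pi * (max 0 (min z (real m) - 1/real m))^2"
    using N by (intro eventually_sequentiallyI[of N]) (auto simp: min_def)
  have "(\<lambda>m. pi * (max 0 (z - 1/real m))^2) \<longlonglongrightarrow> pi * (max 0 (z - 0))^2"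
    by (intro tendsto_intros lim_inverse_n')
  then have "(\<lambda>m. pi * (max 0 (z - 1/real m))^2) \<longlonglongrightarrow> pi * z^2" using assms by simp
  then show ?thesis by (rule Lim_transform_eventually[OF _ ev])
qed



lemma annulus_idx:
  assumes "x \<in> annulus (real i / real m) (real (Suc i) / real m)" "m > 0"
  shows "nat \<lfloor>norm x * real m\<rfloor> = i"
proof -
  have "real i \<le> norm x * m" "norm x * m < real i + 1"
    using assms by (auto simp: annulus_def field_simps)
  then have "\<lfloor>norm x * real m\<rfloor> = int i" by (simp add: floor_eq_iff)
  then show ?thesis by simp
qed

lemma core:
  fixes M :: "'w measure" and X :: "'w \<Rightarrow> nat \<Rightarrow> real^2" and Psi :: "nat \<Rightarrow> 'w \<Rightarrow> real"
    and PsiI :: "'w \<Rightarrow> real" and mu alpha u :: real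
  assumes M: "prob_space M"
    and ppp: "poisson_pp M X mu" and mu: "mu > 0"
    and PsiI_rv: "PsiI \<in> borel_measurable M"
    and PsiI_pos: "AE w in M. PsiI w > 0"
    and PsiI_mom: "integrable M (\<lambda>w. PsiI w powr (2/alpha))"
    and Psi_rv: "\<And>k. Psi k \<in> borel_measurable M"
    and Psi_distr: "\<And>k. distr M borel (Psi k) = distr M borel PsiI"
    and Psi_indep: "prob_space.indep_vars M (\<lambda>_. borel) Psi UNIV"
    and XP: "distr M (PiM UNIV (\<lambda>_. borel) \<Otimes>\<^sub>M PiM UNIV (\<lambda>_. borel)) (\<lambda>w. (X w, \<lambda>k. Psi k w))
           = distr M (PiM UNIV (\<lambda>_. borel)) X \<Otimes>\<^sub>M distr M (PiM UNIV (\<lambda>_. borel)) (\<lambda>w k. Psi k w)"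
    and alpha: "alpha > 0" and u: "u > 0"
  shows "emeasure M {w\<in>space M. \<forall>k. X w k \<noteq> 0 \<longrightarrow> Psi k w < u * norm (X w k) powr alpha}
     \<le> ennreal (exp (- mu * (pi * u powr (-(2/alpha)) * (\<integral>w. PsiI w powr (2/alpha) \<partial>M))))"
proof -
  interpret prob_space M by fact
  define G where "G = {w\<in>space M. \<forall>k. X w k \<noteq> 0 \<longrightarrow> Psi k w < u * norm (X w k) powr alpha}"
  define Lf where "Lf m y = pi * (max 0 (min ((max y 0 / u) powr (1/alpha)) (real m) - 1/real m))^2"
    for m :: nat and y :: real
  define E where "E = (\<integral>w. PsiI w powr (2/alpha) \<partial>M)"
  define zz where "zz y = pi * ((max y 0 / u) powr (1/alpha))^2" for y :: real
  have Lf_meas[measurable]: "(\<lambda>w. Lf m (PsiI w)) \<in> borel_measurable M" for m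
    unfolding Lf_def using PsiI_rv by measurable
  have zz_meas[measurable]: "(\<lambda>w. zz (PsiI w)) \<in> borel_measurable M"
    unfolding zz_def using PsiI_rv by measurable
  have zz_eq: "zz y = pi * u powr (-(2/alpha)) * y powr (2/alpha)" if "y > 0" for y
  proof -
    have "((y / u) powr (1/alpha))^2 = (y/u) powr (2/alpha)"
      by (simp add: power2_eq_square powr_add[symmetric])
    also have "\<dots> = u powr (-(2/alpha)) * y powr (2/alpha)"
      using that u by (simp add: powr_divide powr_minus_divide)
    finally show ?thesis using that by (simp add: zz_def)
  qed
  have zz_int: "integrable M (\<lambda>w. zz (PsiI w))"
  proof -
    have "integrable M (\<lambda>w. pi * u powr (-(2/alpha)) * PsiI w powr (2/alpha))"
      using PsiI_mom by simp
    moreover have "AE w in M. zz (PsiI w) = pi * u powr (-(2/alpha)) * PsiI w powr (2/alpha)"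
      using PsiI_pos by eventually_elim (simp add: zz_eq)
    ultimately show ?thesis
      using PsiI_rv by (subst integrable_cong_AE[where g="\<lambda>w. pi * u powr (-(2/alpha)) * PsiI w powr (2/alpha)"]) auto
  qed
  have zz_integral: "(\<integral>w. zz (PsiI w) \<partial>M) = pi * u powr (-(2/alpha)) * E"
  proof -
    have "(\<integral>w. zz (PsiI w) \<partial>M) = (\<integral>w. pi * u powr (-(2/alpha)) * PsiI w powr (2/alpha) \<partial>M)"
      using PsiI_rv PsiI_pos by (intro integral_cong_AE) (auto elim!: eventually_mono simp: zz_eq)
    then show ?thesis unfolding E_def by simp
  qed
  have lim: "(\<lambda>m. \<integral>w. Lf m (PsiI w) \<partial>M) \<longlonglongrightarrow> pi * u powr (-(2/alpha)) * E"
  proof -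
    have "(\<lambda>m. \<integral>w. Lf m (PsiI w) \<partial>M) \<longlonglongrightarrow> (\<integral>w. zz (PsiI w) \<partial>M)"
    proof (rule integral_dominated_convergence[where w="\<lambda>w. zz (PsiI w)"])
      show "AE w in M. (\<lambda>m. Lf m (PsiI w)) \<longlonglongrightarrow> zz (PsiI w)"
        unfolding Lf_def zz_def by (intro AE_I2 L_lim) simp
      show "AE w in M. norm (Lf m (PsiI w)) \<le> zz (PsiI w)" for m
      proof (intro AE_I2)
        fix w
        define z where "z = (max (PsiI w) 0 / u) powr (1/alpha)"
        have z0: "z \<ge> 0" by (simp add: z_def)
        have "0 \<le> 1/real m" by simp
        moreover have "min z (real m) \<le> z" by simp
        ultimately have "max 0 (min z (real m) - 1/real m) \<le> z" using z0 by linarith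
        then have "(max 0 (min z (real m) - 1/real m))^2 \<le> z^2"
          by (intro power_mono) auto
        then show "norm (Lf m (PsiI w)) \<le> zz (PsiI w)"
          unfolding Lf_def zz_def z_def[symmetric] by simp
      qed
    qed (use zz_int in auto)
    then show ?thesis using zz_integral by simp
  qed
  have step: "emeasure M G \<le> ennreal (exp (- mu * (\<integral>w. Lf m (PsiI w) \<partial>M)))" if m: "m > 0" for m :: nat
  proof -
    define n where "n = m^2"
    define B where "B i = annulus (real i / real m) (real (Suc i) / real m)" for i
    define c where "c i = u * (real (Suc i) / real m) powr alpha" for i
    define q where "q i = measure M {w\<in>space M. PsiI w < c i}" for i
    define NX :: "(nat \<Rightarrow> real^2) measure" where "NX = PiM UNIV (\<lambda>_. borel)"
    define NP :: "(nat \<Rightarrow> real) measure" where "NP = PiM UNIV (\<lambda>_. borel)"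
    define DX where "DX = distr M NX X"
    define DP where "DP = distr M NP (\<lambda>w k. Psi k w)"
    define Gm where "Gm = {w\<in>space M. \<forall>i<n. \<forall>k. X w k \<in> B i \<longrightarrow> Psi k w < c i}"
    define Gm' where "Gm' = {p \<in> space (NX \<Otimes>\<^sub>M NP). \<forall>i<n. \<forall>k. fst p k \<in> B i \<longrightarrow> snd p k < c i}"
    have ppp': "prob_space M \<and> X \<in> M \<rightarrow>\<^sub>M NX \<and>
     (\<forall>(n::nat) (B :: nat \<Rightarrow> (real^2) set).
        (\<forall>i<n. B i \<in> sets lborel \<and> bounded (B i)) \<and> disjoint_family_on B {..<n} \<longrightarrow>
          (\<forall>i<n. AE w in M. finite {k. X w k \<in> B i}) \<and>
          indep_vars (\<lambda>_. count_space UNIV) (\<lambda>i w. point_count (X w) (B i)) {..<n} \<and>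
          (\<forall>i<n. \<forall>j::nat.
             measure M {w \<in> space M. point_count (X w) (B i) = j}
               = exp (- (mu * measure lborel (B i))) * (mu * measure lborel (B i)) ^ j / fact j))"
      using ppp unfolding poisson_pp_def NX_def by auto
    have X_meas[measurable]: "X \<in> M \<rightarrow>\<^sub>M NX" using ppp' by auto
    have P_meas[measurable]: "(\<lambda>w k. Psi k w) \<in> M \<rightarrow>\<^sub>M NP"
      unfolding NP_def using Psi_rv by (intro measurable_PiM_single') auto
    have B_sets[measurable]: "B i \<in> sets borel" for i unfolding B_def by simp
    have idx: "nat \<lfloor>norm x * real m\<rfloor> = i" if "x \<in> B i" for x i
      using annulus_idx[OF that[unfolded B_def] m] .
    have disj: "disjoint_family_on B {..<n}"
      unfolding disjoint_family_on_def using idx by blast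
    have hyp: "(\<forall>i<n. B i \<in> sets lborel \<and> bounded (B i)) \<and> disjoint_family_on B {..<n}"
      using disj by (auto simp: B_def annulus_bounded)
    have finK: "\<forall>i<n. AE w in M. finite {k. X w k \<in> B i}"
      and indN: "indep_vars (\<lambda>_. count_space UNIV) (\<lambda>i w. point_count (X w) (B i)) {..<n}"
      and PN: "\<And>i j. i < n \<Longrightarrow> measure M {w \<in> space M. point_count (X w) (B i) = j}
               = exp (- (mu * measure lborel (B i))) * (mu * measure lborel (B i)) ^ j / fact j"
      using ppp' hyp by blast+
    have q_nn: "0 \<le> q i" for i by (simp add: q_def)
    have spaceNX: "space NX = UNIV" by (simp add: NX_def space_PiM PiE_UNIV_domain)
    have spaceNP: "space NP = UNIV" by (simp add: NP_def space_PiM PiE_UNIV_domain)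
    have Gm'_sets: "Gm' \<in> sets (NX \<Otimes>\<^sub>M NP)"
      unfolding Gm'_def NX_def NP_def by measurable
    have Gm_eq: "Gm = (\<lambda>w. (X w, \<lambda>k. Psi k w)) -` Gm' \<inter> space M"
      unfolding Gm_def Gm'_def by (auto simp: space_pair_measure spaceNX spaceNP)
    have sub: "G \<subseteq> Gm"
    proof
      fix w assume w: "w \<in> G"
      show "w \<in> Gm" unfolding Gm_def
      proof (intro CollectI conjI allI impI)
        show "w \<in> space M" using w by (simp add: G_def)
        fix i k assume "i < n" and xb: "X w k \<in> B i"
        then have x0: "X w k \<noteq> 0" and nx: "norm (X w k) < real (Suc i) / real m"
          by (auto simp: B_def annulus_def)
        have "Psi k w < u * norm (X w k) powr alpha" using w x0 by (simp add: G_def)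
        also have "\<dots> \<le> c i" unfolding c_def using nx u alpha
          by (intro mult_left_mono powr_mono2) auto
        finally show "Psi k w < c i" .
      qed
    qed
    have Gm_sets: "Gm \<in> sets M" unfolding Gm_eq using Gm'_sets by measurable
    interpret DP: prob_space DP unfolding DP_def by (rule prob_space_distr) measurable
    have sets_prod: "sets (DX \<Otimes>\<^sub>M DP) = sets (NX \<Otimes>\<^sub>M NP)"
      unfolding DX_def DP_def by (intro sets_pair_measure_cong) simp_all
    have Gm'_sets2: "Gm' \<in> sets (DX \<Otimes>\<^sub>M DP)" using Gm'_sets sets_prod by simp
    have "emeasure M G \<le> emeasure M Gm" using sub Gm_sets by (rule emeasure_mono)
    also have "emeasure M Gm = emeasure (distr M (NX \<Otimes>\<^sub>M NP) (\<lambda>w. (X w, \<lambda>k. Psi k w))) Gm'"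
      unfolding Gm_eq using Gm'_sets by (subst emeasure_distr) auto
    also have "\<dots> = emeasure (DX \<Otimes>\<^sub>M DP) Gm'"
      using XP unfolding DX_def DP_def NX_def NP_def by simp
    also have "\<dots> = (\<integral>\<^sup>+x. emeasure DP (Pair x -` Gm') \<partial>DX)"
      by (rule DP.emeasure_pair_measure_alt[OF Gm'_sets2])
    also have "\<dots> = (\<integral>\<^sup>+w. emeasure DP (Pair (X w) -` Gm') \<partial>M)"
      unfolding DX_def
      by (rule nn_integral_distr[OF X_meas]) (use DP.measurable_emeasure_Pair[OF Gm'_sets2] in \<open>simp add: DX_def\<close>)
    also have "\<dots> \<le> (\<integral>\<^sup>+w. (\<Prod>i<n. ennreal (q i ^ point_count (X w) (B i))) \<partial>M)"
    proof (rule nn_integral_mono_AE)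
      have "AE w in M. \<forall>i\<in>{..<n}. finite {k. X w k \<in> B i}"
        using finK by (intro eventually_ball_finite) auto
      then show "AE w in M. emeasure DP (Pair (X w) -` Gm') \<le> (\<Prod>i<n. ennreal (q i ^ point_count (X w) (B i)))"
      proof (rule AE_mp, intro AE_I2 impI)
        fix w assume w: "w \<in> space M" and fin: "\<forall>i\<in>{..<n}. finite {k. X w k \<in> B i}"
        define x where "x = X w"
        define K where "K i = {k. x k \<in> B i}" for i
        define KK where "KK = (\<Union>i\<in>{..<n}. K i)"
        define \<iota> where "\<iota> k = nat \<lfloor>norm (x k) * real m\<rfloor>" for k
        have finKK: "finite KK" unfolding KK_def K_def x_def using fin by auto
        have iK: "\<iota> k = i" if "k \<in> K i" for k i using idx that by (simp add: K_def \<iota>_def)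
        have slice: "Pair x -` Gm' \<in> sets NP" using Gm'_sets by (rule sets_Pair1)
        have "emeasure DP (Pair x -` Gm') = emeasure M ((\<lambda>w k. Psi k w) -` (Pair x -` Gm') \<inter> space M)"
          unfolding DP_def using slice by (subst emeasure_distr) auto
        also have "(\<lambda>w k. Psi k w) -` (Pair x -` Gm') \<inter> space M = {w'\<in>space M. \<forall>k\<in>KK. Psi k w' < c (\<iota> k)}"
          unfolding Gm'_def KK_def K_def
          using idx by (auto simp: space_pair_measure spaceNX spaceNP \<iota>_def)
        also have "emeasure M {w'\<in>space M. \<forall>k\<in>KK. Psi k w' < c (\<iota> k)}
            = ennreal (\<Prod>k\<in>KK. q (\<iota> k))"
          unfolding q_def
          by (subst emeasure_eq_measure) (simp add: psi_prod[OF M Psi_indep Psi_distr Psi_rv PsiI_rv finKK])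
        also have "(\<Prod>k\<in>KK. q (\<iota> k)) = (\<Prod>i<n. \<Prod>k\<in>K i. q (\<iota> k))"
          unfolding KK_def
        proof (rule prod.UNION_disjoint)
          show "\<forall>i\<in>{..<n}. finite (K i)" using fin by (simp add: K_def x_def)
          show "\<forall>i\<in>{..<n}. \<forall>j\<in>{..<n}. i \<noteq> j \<longrightarrow> K i \<inter> K j = {}" using iK by blast
        qed simp
        also have "\<dots> = (\<Prod>i<n. q i ^ point_count (X w) (B i))"
          by (intro prod.cong refl) (simp add: iK point_count_def K_def x_def)
        finally show "emeasure DP (Pair (X w) -` Gm') \<le> (\<Prod>i<n. ennreal (q i ^ point_count (X w) (B i)))"
          using q_nn by (simp add: x_def prod_ennreal)
      qed
    qed
    also have "\<dots> = (\<Prod>i<n. \<integral>\<^sup>+w. ennreal (q i ^ point_count (X w) (B i)) \<partial>M)"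
    proof (rule indep_vars_nn_integral)
      show "indep_vars (\<lambda>_. borel) (\<lambda>i w. ennreal (q i ^ point_count (X w) (B i))) {..<n}"
        using indep_vars_compose2[OF indN, where Y="\<lambda>i j. ennreal (q i ^ j)" and N="\<lambda>_. borel"]
        by simp
    qed auto
    also have "\<dots> = (\<Prod>i<n. ennreal (exp (- (mu * measure lborel (B i)) * (1 - q i))))"
    proof (rule prod.cong[OF refl])
      fix i assume i: "i \<in> {..<n}"
      have Nm: "(\<lambda>w. point_count (X w) (B i)) \<in> M \<rightarrow>\<^sub>M count_space UNIV"
        using indN i unfolding indep_vars_def by auto
      show "(\<integral>\<^sup>+w. ennreal (q i ^ point_count (X w) (B i)) \<partial>M) = ennreal (exp (- (mu * measure lborel (B i)) * (1 - q i)))"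
        by (rule poisson_pgf[OF M Nm PN q_nn]) (use i in simp)
    qed
    also have "\<dots> = ennreal (exp (- mu * (\<Sum>i<n. measure lborel (B i) * (1 - q i))))"
      by (simp add: prod_ennreal exp_sum[symmetric] sum_distrib_left sum_negf mult_ac)
    also have "\<dots> \<le> ennreal (exp (- mu * (\<integral>w. Lf m (PsiI w) \<partial>M)))"
    proof -
      define co where "co i = pi * ((real (Suc i)/m)^2 - (real i/m)^2)" for i
      have ind_meas: "(\<lambda>w. indicator {c i ..} (PsiI w) :: real) \<in> borel_measurable M" for i
        using PsiI_rv by measurable
      have ind_int: "integrable M (\<lambda>w. co i * indicator {c i ..} (PsiI w))" for i
        by (intro integrable_mult_right integrable_const_bound[where B=1] AE_I2 ind_meas)
           (simp add: indicator_def)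
      have "(\<Sum>i<n. measure lborel (B i) * (1 - q i)) = (\<Sum>i<n. \<integral>w. co i * indicator {c i ..} (PsiI w) \<partial>M)"
      proof (rule sum.cong[OF refl])
        fix i
        have "measure lborel (B i) = co i"
          unfolding B_def co_def using m by (subst annulus_measure) (auto intro: divide_right_mono)
        moreover have "1 - q i = measure M {w\<in>space M. c i \<le> PsiI w}"
        proof -
          have ev: "{w\<in>space M. PsiI w < c i} \<in> events" using PsiI_rv by measurable
          have "space M - {w\<in>space M. PsiI w < c i} = {w\<in>space M. c i \<le> PsiI w}" by auto
          then show ?thesis using prob_compl[OF ev] by (simp add: q_def)
        qed
        moreover have "(\<integral>w. indicator {c i ..} (PsiI w) \<partial>M) = measure M {w\<in>space M. c i \<le> PsiI w}"
        proof -
          have "(\<integral>w. indicator {c i ..} (PsiI w) \<partial>M) = (\<integral>w. indicator {w\<in>space M. c i \<le> PsiI w} w \<partial>M)"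
            by (rule Bochner_Integration.integral_cong[OF refl]) (auto simp: indicator_def)
          also have "\<dots> = measure M ({w\<in>space M. c i \<le> PsiI w} \<inter> space M)"
            by (rule Bochner_Integration.integral_indicator)
          also have "{w\<in>space M. c i \<le> PsiI w} \<inter> space M = {w\<in>space M. c i \<le> PsiI w}" by auto
          finally show ?thesis .
        qed
        ultimately show "measure lborel (B i) * (1 - q i) = (\<integral>w. co i * indicator {c i ..} (PsiI w) \<partial>M)"
          by simp
      qed
      also have "\<dots> = (\<integral>w. (\<Sum>i<n. co i * indicator {c i ..} (PsiI w)) \<partial>M)"
        by (rule Bochner_Integration.integral_sum[symmetric]) (rule ind_int)
      also have "\<dots> \<ge> (\<integral>w. Lf m (PsiI w) \<partial>M)"
      proof (rule integral_mono)
        show "integrable M (\<lambda>w. \<Sum>i<n. co i * indicator {c i ..} (PsiI w))"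
          using ind_int by (intro Bochner_Integration.integrable_sum) auto
        show "integrable M (\<lambda>w. Lf m (PsiI w))"
        proof (rule integrable_const_bound[where B="pi * (real m)^2"])
          show "AE w in M. norm (Lf m (PsiI w)) \<le> pi * (real m)^2"
          proof (intro AE_I2)
            fix w
            define z where "z = (max (PsiI w) 0 / u) powr (1/alpha)"
            have "0 \<le> 1/real m" by simp
            moreover have "min z (real m) \<le> real m" by simp
            ultimately have "max 0 (min z (real m) - 1/real m) \<le> real m" by linarith
            then have "(max 0 (min z (real m) - 1/real m))^2 \<le> (real m)^2"
              by (intro power_mono) auto
            then show "norm (Lf m (PsiI w)) \<le> pi * (real m)^2"
              unfolding Lf_def z_def[symmetric] by simp
          qed
        qed (rule Lf_meas)
        fix w
        show "Lf m (PsiI w) \<le> (\<Sum>i<n. co i * indicator {c i ..} (PsiI w))"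
          unfolding Lf_def co_def c_def n_def by (rule S_ge_L[OF m u alpha])
      qed
      finally have "(\<integral>w. Lf m (PsiI w) \<partial>M) \<le> (\<Sum>i<n. measure lborel (B i) * (1 - q i))" .
      then show ?thesis using mu by (intro ennreal_leI) simp
    qed
    finally show ?thesis .
  qed
  have fin: "emeasure M G \<noteq> top"
    using step[of 1] by (auto simp: top_unique)
  have "measure M G \<le> exp (- mu * (pi * u powr (-(2/alpha)) * E))"
  proof (rule LIMSEQ_le_const)
    show "(\<lambda>m. exp (- mu * (\<integral>w. Lf m (PsiI w) \<partial>M))) \<longlonglongrightarrow> exp (- mu * (pi * u powr (-(2/alpha)) * E))"
      by (intro tendsto_intros lim)
    show "\<exists>N. \<forall>m\<ge>N. measure M G \<le> exp (- mu * (\<integral>w. Lf m (PsiI w) \<partial>M))"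
    proof (intro exI[of _ 1] allI impI)
      fix m :: nat assume "1 \<le> m"
      then have "emeasure M G \<le> ennreal (exp (- mu * (\<integral>w. Lf m (PsiI w) \<partial>M)))" by (intro step) auto
      then show "measure M G \<le> exp (- mu * (\<integral>w. Lf m (PsiI w) \<partial>M))"
        using emeasure_eq_ennreal_measure[OF fin] by (simp add: ennreal_le_iff)
    qed
  qed
  then show ?thesis
    using emeasure_eq_ennreal_measure[OF fin] unfolding G_def[symmetric] E_def[symmetric]
    by (simp add: ennreal_leI)
qed



lemma sir_bound:
  fixes x :: "nat \<Rightarrow> real^2" and psi :: "nat \<Rightarrow> real"
  assumes psi0: "psi0 > 0" and Rf: "Rf > 0" and P: "P > 0" and Gamma: "\<Gamma> > 0"
    and x0: "x k \<noteq> 0"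
    and ge: "psi0 * Rf powr (-beta) / (\<Gamma> * P\<^sup>2) * norm (x k) powr alpha \<le> psi k"
  shows "SIR alpha beta Rf P psi0 x psi \<le> ennreal \<Gamma>"
proof -
  define a where "a = psi0 * Rf powr (-beta)"
  define t where "t = P\<^sup>2 * psi k * norm (x k) powr (- alpha)"
  define S where "S = (\<Sum>k. ennreal (P\<^sup>2 * psi k * norm (x k) powr (- alpha)))"
  have a0: "a > 0" using psi0 Rf by (simp add: a_def)
  have nx: "norm (x k) > 0" using x0 by simp
  have "a / (\<Gamma> * P\<^sup>2) * (norm (x k) powr alpha * norm (x k) powr (- alpha)) \<le> psi k * norm (x k) powr (- alpha)"
  proof -
    have "psi0 * Rf powr (-beta) / (\<Gamma> * P\<^sup>2) * norm (x k) powr alpha * norm (x k) powr (- alpha) \<le> psi k * norm (x k) powr (- alpha)"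
      by (rule mult_right_mono[OF ge]) simp
    then show ?thesis unfolding a_def by (simp add: mult.assoc)
  qed
  moreover have "norm (x k) powr alpha * norm (x k) powr (- alpha) = 1"
    using nx by (simp add: powr_add[symmetric])
  ultimately have "a / (\<Gamma> * P\<^sup>2) \<le> psi k * norm (x k) powr (- alpha)" by simp
  then have "P\<^sup>2 * (a / (\<Gamma> * P\<^sup>2)) \<le> P\<^sup>2 * (psi k * norm (x k) powr (- alpha))"
    by (intro mult_left_mono) auto
  then have ta: "a / \<Gamma> \<le> t" using P unfolding t_def by (simp add: field_simps)
  have "ennreal t \<le> S"
    unfolding S_def t_def using sum_le_suminf[OF summableI, of "{k}" "\<lambda>k. ennreal (P\<^sup>2 * psi k * norm (x k) powr (- alpha))"]
    by simp
  then have Sge: "ennreal (a / \<Gamma>) \<le> S" using ta by (meson ennreal_leI order_trans)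
  have "ennreal a / S \<le> ennreal \<Gamma>"
  proof (cases S rule: ennreal_cases)
    case (real s)
    then have s: "a / \<Gamma> \<le> s" using Sge a0 Gamma by (simp add: ennreal_le_iff)
    have s0: "s > 0" using s a0 Gamma by (smt (verit) divide_pos_pos)
    have "a / s \<le> \<Gamma>" using s s0 Gamma by (simp add: field_simps)
    then show ?thesis using real s0 a0 by (simp add: divide_ennreal ennreal_leI)
  next
    case top
    then show ?thesis by simp
  qed
  then show ?thesis unfolding SIR_def a_def S_def by simp
qed

lemma indep_rv_distr:
  assumes Mp: "prob_space M" and ind: "indep_rv M S X T Y"
  shows "distr M (S \<Otimes>\<^sub>M T) (\<lambda>x. (X x, Y x)) = distr M S X \<Otimes>\<^sub>M distr M T Y"
proof -
  interpret prob_space M by fact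
  have rvs: "random_variable S X" "random_variable T Y"
    and I: "indep_set (sigma_sets (space M) {X -` A \<inter> space M | A. A \<in> sets S})
       (sigma_sets (space M) {Y -` A \<inter> space M | A. A \<in> sets T})"
    using ind unfolding indep_rv_def by auto
  then have XY: "random_variable (S \<Otimes>\<^sub>M T) (\<lambda>x. (X x, Y x))"
    by (intro measurable_Pair)
  let ?S = "distr M S X" and ?T = "distr M T Y" and ?J = "distr M (S \<Otimes>\<^sub>M T) (\<lambda>x. (X x, Y x))"
  interpret X: prob_space ?S by (rule prob_space_distr) fact
  interpret Y: prob_space ?T by (rule prob_space_distr) fact
  interpret XY: pair_prob_space ?S ?T ..
  have "?S \<Otimes>\<^sub>M ?T = ?J"
  proof (rule pair_measure_eqI)
    show "sigma_finite_measure ?S" ..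
    show "sigma_finite_measure ?T" ..
    fix A B assume A: "A \<in> sets ?S" and B: "B \<in> sets ?T"
    have "emeasure ?J (A \<times> B) = emeasure M ((\<lambda>x. (X x, Y x)) -` (A \<times> B) \<inter> space M)"
      using A B by (intro emeasure_distr[OF XY]) auto
    also have "(\<lambda>x. (X x, Y x)) -` (A \<times> B) \<inter> space M = (X -` A \<inter> space M) \<inter> (Y -` B \<inter> space M)"
      by auto
    also have "emeasure M \<dots> = emeasure M (X -` A \<inter> space M) * emeasure M (Y -` B \<inter> space M)"
    proof -
      have a: "X -` A \<inter> space M \<in> sigma_sets (space M) {X -` A \<inter> space M | A. A \<in> sets S}"
        using A by (intro sigma_sets.Basic) auto
      have b: "Y -` B \<inter> space M \<in> sigma_sets (space M) {Y -` A \<inter> space M | A. A \<in> sets T}"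
        using B by (intro sigma_sets.Basic) auto
      have "prob ((X -` A \<inter> space M) \<inter> (Y -` B \<inter> space M)) = prob (X -` A \<inter> space M) * prob (Y -` B \<inter> space M)"
        using I a b unfolding indep_sets2_eq by blast
      then show ?thesis
        by (simp add: emeasure_eq_measure measure_nonneg ennreal_mult)
    qed
    also have "\<dots> = emeasure ?S A * emeasure ?T B"
      using rvs A B by (simp add: emeasure_distr)
    finally show "emeasure ?S A * emeasure ?T B = emeasure ?J (A \<times> B)" by simp
  qed simp
  then show ?thesis by simp
qed

lemma arith_powr:
  fixes v Rf P \<Gamma> beta d :: real
  assumes v: "v > 0" and Rf: "Rf > 0" and P: "P > 0" and G: "\<Gamma> > 0"
  shows "(v * Rf powr (-beta) / (\<Gamma> * P\<^sup>2)) powr (-d) = \<Gamma> powr d * (P\<^sup>2 * Rf powr beta) powr d * v powr (-d)"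
proof -
  have "v * Rf powr (-beta) / (\<Gamma> * P\<^sup>2) = v / (\<Gamma> * (P\<^sup>2 * Rf powr beta))"
    using Rf by (simp add: powr_minus field_simps)
  also have "\<dots> powr (-d) = (\<Gamma> * (P\<^sup>2 * Rf powr beta)) powr d / v powr d"
    using v Rf P G by (simp add: powr_minus powr_divide)
  also have "\<dots> = \<Gamma> powr d * (P\<^sup>2 * Rf powr beta) powr d * v powr (-d)"
    using v Rf P G by (simp add: powr_mult powr_minus divide_inverse)
  finally show ?thesis .
qed

theorem mainTheorem3:
  fixes M :: "'w measure"
    and X :: "'w \<Rightarrow> nat \<Rightarrow> real^2"
    and Psi :: "nat \<Rightarrow> 'w \<Rightarrow> real"
    and PsiI Psi0 :: "'w \<Rightarrow> real"
    and lam rho alpha beta Rf P \<Gamma> :: real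
  defines "\<delta> \<equiv> 2 / alpha"
  defines "\<kappa> \<equiv> pi * lam * prob_space.expectation M (\<lambda>w. PsiI w powr \<delta>)
                   * (P\<^sup>2 * Rf powr beta) powr \<delta>"
  assumes M: "prob_space M"
    and int_pos: "lam * rho > 0"
    and ppp: "poisson_pp M X (lam * rho)"
    and PsiI_rv: "PsiI \<in> borel_measurable M"
    and PsiI_pos: "AE w in M. PsiI w > 0"
    and PsiI_mom: "integrable M (\<lambda>w. PsiI w powr \<delta>)"
    and Psi_rv: "\<And>k. Psi k \<in> borel_measurable M"
    and Psi_distr: "\<And>k. distr M borel (Psi k) = distr M borel PsiI"
    and Psi_indep: "prob_space.indep_vars M (\<lambda>_. borel) Psi UNIV"
    and X_Psi_indep: "indep_rv M (PiM UNIV (\<lambda>_. borel)) X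
                        (PiM UNIV (\<lambda>_. borel)) (\<lambda>w k. Psi k w)"
    and Psi0_rv: "Psi0 \<in> borel_measurable M"
    and Psi0_pos: "AE w in M. Psi0 w > 0"
    and Psi0_indep: "indep_rv M
                        (PiM UNIV (\<lambda>_. borel) \<Otimes>\<^sub>M PiM UNIV (\<lambda>_. borel)) (\<lambda>w. (X w, (\<lambda>k. Psi k w)))
                        borel Psi0"
    and alpha: "alpha > 2" and beta: "beta > 0" and Rf: "Rf > 0" and P: "P > 0"
    and Gamma: "\<Gamma> > 0"
  shows "measure M {w \<in> space M. SIR alpha beta Rf P (Psi0 w) (X w) (\<lambda>k. Psi k w) \<le> ennreal \<Gamma>}
           \<ge> 1 - prob_space.expectation M
                   (\<lambda>w. exp (- rho * \<kappa> * \<Gamma> powr \<delta> * Psi0 w powr (- \<delta>)))"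
proof -
  interpret prob_space M by (rule M)
  define NX :: "(nat \<Rightarrow> real^2) measure" where "NX = PiM UNIV (\<lambda>_. borel)"
  define NP :: "(nat \<Rightarrow> real) measure" where "NP = PiM UNIV (\<lambda>_. borel)"
  define J where "J = distr M (NX \<Otimes>\<^sub>M NP) (\<lambda>w. (X w, \<lambda>k. Psi k w))"
  define D0 where "D0 = distr M borel Psi0"
  define U where "U v = v * Rf powr (-beta) / (\<Gamma> * P\<^sup>2)" for v
  define E where "E = expectation (\<lambda>w. PsiI w powr \<delta>)"
  define F where "F w = exp (- rho * \<kappa> * \<Gamma> powr \<delta> * Psi0 w powr (- \<delta>))" for w
  have alpha0: "alpha > 0" using alpha by simp
  have X_meas[measurable]: "X \<in> M \<rightarrow>\<^sub>M NX" using ppp unfolding poisson_pp_def NX_def by auto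
  have P_meas[measurable]: "(\<lambda>w k. Psi k w) \<in> M \<rightarrow>\<^sub>M NP"
    unfolding NP_def using Psi_rv by (intro measurable_PiM_single') auto
  have spaceNX: "space NX = UNIV" by (simp add: NX_def space_PiM PiE_UNIV_domain)
  have spaceNP: "space NP = UNIV" by (simp add: NP_def space_PiM PiE_UNIV_domain)
  have XP: "distr M (PiM UNIV (\<lambda>_. borel) \<Otimes>\<^sub>M PiM UNIV (\<lambda>_. borel)) (\<lambda>w. (X w, \<lambda>k. Psi k w))
           = distr M (PiM UNIV (\<lambda>_. borel)) X \<Otimes>\<^sub>M distr M (PiM UNIV (\<lambda>_. borel)) (\<lambda>w k. Psi k w)"
    by (rule indep_rv_distr[OF M X_Psi_indep])
  have E0: "E \<ge> 0" unfolding E_def by (intro integral_nonneg_AE) simp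
  have rk0: "rho * \<kappa> \<ge> 0"
  proof -
    have "rho * \<kappa> = (lam * rho) * (pi * E * (P\<^sup>2 * Rf powr beta) powr \<delta>)"
      unfolding \<kappa>_def E_def by (simp add: mult_ac)
    also have "\<dots> \<ge> 0" using int_pos E0 by simp
    finally show ?thesis .
  qed
  have core_app: "emeasure M {w\<in>space M. \<forall>k. X w k \<noteq> 0 \<longrightarrow> Psi k w < U v * norm (X w k) powr alpha}
      \<le> ennreal (exp (- rho * \<kappa> * \<Gamma> powr \<delta> * v powr (- \<delta>)))" if v: "v > 0" for v
  proof -
    have Uv: "U v > 0" using v Rf P Gamma by (simp add: U_def)
    have bnd: "emeasure M {w\<in>space M. \<forall>k. X w k \<noteq> 0 \<longrightarrow> Psi k w < U v * norm (X w k) powr alpha}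
      \<le> ennreal (exp (- (lam * rho) * (pi * U v powr (-(2/alpha)) * (\<integral>w. PsiI w powr (2/alpha) \<partial>M))))"
      by (rule core[OF M ppp int_pos PsiI_rv PsiI_pos PsiI_mom[unfolded \<delta>_def] Psi_rv Psi_distr Psi_indep XP alpha0 Uv])
    have eq: "- (lam * rho) * (pi * U v powr (-(2/alpha)) * (\<integral>w. PsiI w powr (2/alpha) \<partial>M))
        = - rho * \<kappa> * \<Gamma> powr \<delta> * v powr (- \<delta>)"
      unfolding U_def \<kappa>_def \<delta>_def[symmetric] using arith_powr[OF v Rf P Gamma, of beta \<delta>]
      by (simp add: mult_ac)
    show ?thesis using bnd unfolding eq .
  qed
  have JD: "D0 \<Otimes>\<^sub>M J = distr M (borel \<Otimes>\<^sub>M (NX \<Otimes>\<^sub>M NP)) (\<lambda>w. (Psi0 w, (X w, \<lambda>k. Psi k w)))"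
    using indep_rv_distr[OF M indep_rv_sym[OF M Psi0_indep]] unfolding D0_def J_def NX_def NP_def by simp
  define T where "T = {p \<in> space (borel \<Otimes>\<^sub>M (NX \<Otimes>\<^sub>M NP)). 0 < fst p \<longrightarrow>
      (\<forall>k. fst (snd p) k \<noteq> 0 \<longrightarrow> snd (snd p) k < U (fst p) * norm (fst (snd p) k) powr alpha)}"
  have T_sets: "T \<in> sets (borel \<Otimes>\<^sub>M (NX \<Otimes>\<^sub>M NP))"
    unfolding T_def U_def NX_def NP_def by measurable
  define Sset where "Sset = {w \<in> space M. SIR alpha beta Rf P (Psi0 w) (X w) (\<lambda>k. Psi k w) \<le> ennreal \<Gamma>}"
  have Sset_ev: "Sset \<in> events" unfolding Sset_def SIR_def
    using Psi0_rv Psi_rv X_meas[unfolded NX_def] by measurable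
  define T' where "T' = (\<lambda>w. (Psi0 w, (X w, \<lambda>k. Psi k w))) -` T \<inter> space M"
  have T'_ev: "T' \<in> events" unfolding T'_def using T_sets Psi0_rv by measurable
  have compl_sub: "space M - Sset \<subseteq> T'"
  proof
    fix w assume w: "w \<in> space M - Sset"
    have "0 < Psi0 w \<longrightarrow> (\<forall>k. X w k \<noteq> 0 \<longrightarrow> Psi k w < U (Psi0 w) * norm (X w k) powr alpha)"
    proof (intro impI allI, rule ccontr)
      fix k assume p: "0 < Psi0 w" and x0: "X w k \<noteq> 0" and n: "\<not> Psi k w < U (Psi0 w) * norm (X w k) powr alpha"
      then have "SIR alpha beta Rf P (Psi0 w) (X w) (\<lambda>k. Psi k w) \<le> ennreal \<Gamma>"
        by (intro sir_bound[where x="X w" and k=k and psi="\<lambda>k. Psi k w", OF p Rf P Gamma x0]) (simp add: U_def not_less)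
      then show False using w by (simp add: Sset_def)
    qed
    then show "w \<in> T'" using w
      by (simp add: T'_def T_def space_pair_measure spaceNX spaceNP)
  qed
  interpret Jp: prob_space J unfolding J_def by (rule prob_space_distr) measurable
  have sets_prod: "sets (D0 \<Otimes>\<^sub>M J) = sets (borel \<Otimes>\<^sub>M (NX \<Otimes>\<^sub>M NP))"
    unfolding D0_def J_def by (intro sets_pair_measure_cong) simp_all
  have T_sets2: "T \<in> sets (D0 \<Otimes>\<^sub>M J)" using T_sets sets_prod by simp
  have F_int: "integrable M F"
  proof (rule integrable_const_bound[where B=1])
    show "AE w in M. norm (F w) \<le> 1"
    proof (intro AE_I2)
      fix w
      have "0 \<le> rho * \<kappa> * \<Gamma> powr \<delta> * Psi0 w powr (- \<delta>)" using rk0 by simp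
      then show "norm (F w) \<le> 1" by (simp add: F_def)
    qed
    show "F \<in> borel_measurable M" unfolding F_def using Psi0_rv by measurable
  qed
  have "emeasure M T' = emeasure (D0 \<Otimes>\<^sub>M J) T"
  proof -
    have R: "(\<lambda>w. (Psi0 w, X w, \<lambda>k. Psi k w)) \<in> M \<rightarrow>\<^sub>M borel \<Otimes>\<^sub>M (NX \<Otimes>\<^sub>M NP)"
      using Psi0_rv by measurable
    show ?thesis unfolding T'_def JD using T_sets R by (subst emeasure_distr) auto
  qed
  also have "\<dots> = (\<integral>\<^sup>+v. emeasure J (Pair v -` T) \<partial>D0)"
    by (rule Jp.emeasure_pair_measure_alt[OF T_sets2])
  also have "\<dots> = (\<integral>\<^sup>+w. emeasure J (Pair (Psi0 w) -` T) \<partial>M)"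
    unfolding D0_def
    by (rule nn_integral_distr[OF Psi0_rv]) (use Jp.measurable_emeasure_Pair[OF T_sets2] in \<open>simp add: D0_def\<close>)
  also have "\<dots> \<le> (\<integral>\<^sup>+w. ennreal (F w) \<partial>M)"
  proof (rule nn_integral_mono_AE)
    show "AE w in M. emeasure J (Pair (Psi0 w) -` T) \<le> ennreal (F w)"
      using Psi0_pos
    proof (rule AE_mp, intro AE_I2 impI)
      fix w assume w: "w \<in> space M" and p: "0 < Psi0 w"
      define v where "v = Psi0 w"
      have slice: "Pair v -` T \<in> sets (NX \<Otimes>\<^sub>M NP)" using T_sets by (rule sets_Pair1)
      have "emeasure J (Pair v -` T) = emeasure M ((\<lambda>w. (X w, \<lambda>k. Psi k w)) -` (Pair v -` T) \<inter> space M)"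
        unfolding J_def using slice by (subst emeasure_distr) auto
      also have "(\<lambda>w. (X w, \<lambda>k. Psi k w)) -` (Pair v -` T) \<inter> space M
          = {w\<in>space M. \<forall>k. X w k \<noteq> 0 \<longrightarrow> Psi k w < U v * norm (X w k) powr alpha}"
        using p unfolding T_def v_def by (auto simp: space_pair_measure spaceNX spaceNP)
      also have "emeasure M \<dots> \<le> ennreal (F w)"
        unfolding F_def v_def by (rule core_app[OF p])
      finally show "emeasure J (Pair (Psi0 w) -` T) \<le> ennreal (F w)" by (simp add: v_def)
    qed
  qed
  also have "\<dots> = ennreal (expectation F)"
    by (rule nn_integral_eq_integral[OF F_int]) (simp add: F_def)
  finally have "emeasure M T' \<le> ennreal (expectation F)" .
  then have T'_le: "prob T' \<le> expectation F"
    using F_int by (simp add: emeasure_eq_measure ennreal_le_iff integral_nonneg_AE F_def)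
  have "prob (space M - Sset) \<le> prob T'"
    using compl_sub T'_ev by (rule finite_measure_mono)
  moreover have "prob (space M - Sset) = 1 - prob Sset" by (rule prob_compl[OF Sset_ev])
  ultimately have "1 - expectation F \<le> prob Sset" using T'_le by linarith
  then show ?thesis unfolding Sset_def F_def .
qed

end
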